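(* Let $f\in\mathcal{K}$ have radius of convergence $R>0$ and fulcrum $F$. Assume that $$\lim_{s\uparrow\ln R}\frac{F^{(k)}(s)}{F''(s)^{k/2}}=0\quad\text{for every integer }k\ge3.$$ Then $f$ is Gaussian.
   Context: The class $\mathcal{K}$ consists of non-constant power series $f(z)=\sum_{n\ge0}a_nz^n$ with radius of convergence $R\in(0,+\infty]$, with $a_n\ge 0$ for all $n$ and $a_0>0$. For $t\in(0,R)$, $X_t$ is the random variable with $\mathbf{P}(X_t=n)=a_nt^n/f(t)$, $n\ge0$ (the Khinchin family of $f$). Write $m_f(t)=\mathbf{E}(X_t)$, $\sigma_f^2(t)=\mathbf{V}(X_t)>0$ and $\breve{X}_t=(X_t-m_f(t))/\sigma_f(t)$. $f$ is called Gaussian if $\breve{X}_t$ converges in distribution to a standard normal random variable as $t\uparrow R$ (i.e. $t\to+\infty$ if $R=+\infty$). The fulcrum of $f$ is $F(s)=\ln f(e^s)$ for real $s<\ln R$; one has $F''(s)=\sigma_f^2(e^s)$. *)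

theory Defs
  imports "HOL-Probability.Probability"
begin

text \<open>A power series f(z) = sum a_n z^n is given by its coefficient sequence a.\<close>

definition in_class_K :: "(nat \<Rightarrow> real) \<Rightarrow> bool" where
  "in_class_K a \<longleftrightarrow> (\<forall>n. a n \<ge> 0) \<and> a 0 > 0 \<and> (\<exists>n>0. a n \<noteq> 0)
      \<and> conv_radius a > 0"

definition pser :: "(nat \<Rightarrow> real) \<Rightarrow> real \<Rightarrow> real" where
  "pser a t = (\<Sum>n. a n * t ^ n)"

definition khinchin_prob :: "(nat \<Rightarrow> real) \<Rightarrow> real \<Rightarrow> nat \<Rightarrow> real" where
  "khinchin_prob a t n = a n * t ^ n / pser a t"

definition khinchin_mean :: "(nat \<Rightarrow> real) \<Rightarrow> real \<Rightarrow> real" where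
  "khinchin_mean a t = (\<Sum>n. real n * khinchin_prob a t n)"

definition khinchin_var :: "(nat \<Rightarrow> real) \<Rightarrow> real \<Rightarrow> real" where
  "khinchin_var a t = (\<Sum>n. (real n - khinchin_mean a t)^2 * khinchin_prob a t n)"

definition khinchin_norm_cdf :: "(nat \<Rightarrow> real) \<Rightarrow> real \<Rightarrow> real \<Rightarrow> real" where
  "khinchin_norm_cdf a t x =
     (\<Sum>n. if (real n - khinchin_mean a t) / sqrt (khinchin_var a t) \<le> x
           then khinchin_prob a t n else 0)"

definition up_to :: "ereal \<Rightarrow> real filter" where
  "up_to R = (if R = \<infinity> then at_top else at_left (real_of_ereal R))"

definition up_to_ln :: "ereal \<Rightarrow> real filter" where
  "up_to_ln R = (if R = \<infinity> then at_top else at_left (ln (real_of_ereal R)))"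

text \<open>Gaussian: the normalized Khinchin variables converge in distribution to N(0,1),
  i.e. their CDFs converge pointwise to the (everywhere continuous) standard normal CDF.\<close>
definition gaussian :: "(nat \<Rightarrow> real) \<Rightarrow> bool" where
  "gaussian a \<longleftrightarrow> (\<forall>x. ((\<lambda>t. khinchin_norm_cdf a t x) \<longlongrightarrow>
       cdf (density lborel std_normal_density) x) (up_to (conv_radius a)))"

definition fulcrum :: "(nat \<Rightarrow> real) \<Rightarrow> real \<Rightarrow> real" where
  "fulcrum a s = ln (pser a (exp s))"

end

theory Submission
  imports Defs "HOL-Complex_Analysis.Complex_Analysis"
begin

fun bellc :: "(nat \<Rightarrow> 'a::comm_ring_1) \<Rightarrow> nat \<Rightarrow> 'a" where
  "bellc g 0 = 1"
| "bellc g (Suc k) = (\<Sum>i=0..k. of_nat (k choose i) * g (Suc i) * bellc g (k - i))"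

declare bellc.simps[simp del]

lemma bellc_0[simp]: "bellc g 0 = 1" by (simp add: bellc.simps)
lemma bellc_Suc: "bellc g (Suc k) = (\<Sum>i=0..k. of_nat (k choose i) * g (Suc i) * bellc g (k - i))"
  by (simp add: bellc.simps)

lemma bellc_cong:
  assumes "\<And>j. j \<ge> 1 \<Longrightarrow> g j = h j"
  shows "bellc g k = bellc h k"
proof (induction k rule: less_induct)
  case (less k)
  show ?case
  proof (cases k)
    case 0 then show ?thesis by simp
  next
    case (Suc k')
    show ?thesis unfolding Suc bellc_Suc
      by (intro sum.cong refl) (use less Suc assms in auto)
  qed
qed

lemma bellc_of_real:
  "bellc (\<lambda>j. of_real (g j) :: 'a::{real_algebra_1,comm_ring_1}) k = of_real (bellc g k)"
proof (induction k rule: less_induct)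
  case (less k)
  show ?case
  proof (cases k)
    case 0 then show ?thesis by simp
  next
    case (Suc k')
    have "bellc (\<lambda>j. of_real (g j) :: 'a) k =
        (\<Sum>i=0..k'. of_real (of_nat (k' choose i) * g (Suc i) * bellc g (k' - i)))"
      unfolding Suc bellc_Suc
      by (intro sum.cong refl) (use less Suc in auto)
    also have "\<dots> = of_real (bellc g k)" unfolding Suc bellc_Suc of_real_sum ..
    finally show ?thesis .
  qed
qed

lemma bellc_tendsto:
  fixes g :: "'b \<Rightarrow> nat \<Rightarrow> real"
  assumes "\<And>j. ((\<lambda>x. g x (Suc j)) \<longlongrightarrow> g0 (Suc j)) F"
  shows "((\<lambda>x. bellc (g x) k) \<longlongrightarrow> bellc g0 k) F"
proof (induction k rule: less_induct)
  case (less k)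
  show ?case
  proof (cases k)
    case 0 then show ?thesis by simp
  next
    case (Suc k')
    show ?thesis unfolding Suc bellc_Suc
      by (intro tendsto_sum tendsto_mult tendsto_const assms) (use less Suc in auto)
  qed
qed

definition gnorm :: "nat \<Rightarrow> real" where "gnorm j = (if j = 2 then 1 else 0)"

lemma bellc_gnorm_Suc: "bellc gnorm (Suc (Suc k)) = real (Suc k) * bellc gnorm k"
proof -
  have "bellc gnorm (Suc (Suc k)) = (\<Sum>i\<in>{1}. of_nat (Suc k choose i) * gnorm (Suc i) * bellc gnorm (Suc k - i))"
    unfolding bellc_Suc by (intro sum.mono_neutral_right) (auto simp: gnorm_def)
  then show ?thesis by (simp add: gnorm_def)
qed

lemma bellc_gnorm:
  "bellc gnorm (2*j) = fact (2 * j) / (2^j * fact j) \<and> bellc gnorm (2*j+1) = 0"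
proof (induction j)
  case 0
  then show ?case by (simp add: bellc_Suc gnorm_def)
next
  case (Suc j)
  have e: "2 * Suc j = Suc (Suc (2*j))" by simp
  have o: "2 * Suc j + 1 = Suc (Suc (2*j+1))" by simp
  have f: "fact (Suc (Suc (2*j))) = (2 * real j + 2) * (2 * real j + 1) * fact (2*j)"
    by (simp add: algebra_simps)
  have f2: "fact (Suc j) = (real j + 1) * fact j" by simp
  have "bellc gnorm (Suc (Suc (2*j))) = (2 * real j + 1) * (fact (2 * j) / (2^j * fact j))"
    using Suc bellc_gnorm_Suc[of "2*j"] by simp
  also have "\<dots> = fact (Suc (Suc (2*j))) / (2^Suc j * fact (Suc j))"
  proof -
    have nz: "2 ^ Suc j * ((real j + 1) * fact j) \<noteq> 0" "2 ^ j * fact j \<noteq> (0::real)"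
      by (simp_all add: add_pos_nonneg)
    show ?thesis unfolding f f2 times_divide_eq_right frac_eq_eq[OF nz(2) nz(1)]
      by (simp add: algebra_simps)
  qed
  finally show ?case unfolding e o using bellc_gnorm_Suc[of "2*j+1"] Suc by simp
qed

lemma bellc_gnorm_moment:
  "bellc gnorm k = (LINT x|std_normal_distribution. x^k)"
proof (cases "even k")
  case True
  then obtain j where "k = 2*j" by blast
  then show ?thesis using bellc_gnorm[of j] std_normal_distribution_even_moments(1)[of j] by simp
next
  case False
  then obtain j where "k = 2*j+1" using oddE by blast
  then show ?thesis using bellc_gnorm[of j] integral_std_normal_distribution_moment_odd[of k] False by simp
qed


lemma real_complex_higher_deriv:
  fixes G :: "complex \<Rightarrow> complex" and h :: "real \<Rightarrow> real"
  assumes holo: "G holomorphic_on U" and U: "open U" and I: "open I"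
    and IU: "\<And>x. x \<in> I \<Longrightarrow> complex_of_real x \<in> U"
    and eq: "\<And>x. x \<in> I \<Longrightarrow> G (of_real x) = of_real (h x)"
  shows "x \<in> I \<Longrightarrow> (deriv ^^ k) G (of_real x) = of_real ((deriv ^^ k) h x)"
proof (induction k arbitrary: x)
  case 0 then show ?case using eq by simp
next
  case (Suc k x)
  define D where "D = deriv ((deriv ^^ k) G) (of_real x)"
  have hol: "(deriv ^^ k) G holomorphic_on U" using holo U by (rule holomorphic_higher_deriv)
  have "((deriv ^^ k) G has_field_derivative D) (at (of_real x))"
    unfolding D_def using hol U IU[OF Suc.prems]
    by (intro DERIV_deriv_iff_field_differentiable[THEN iffD2])
       (meson holomorphic_on_imp_differentiable_at)
  then have "((\<lambda>y. (deriv ^^ k) G (of_real y)) has_vector_derivative D) (at x)"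
    by (rule has_vector_derivative_real_field)
  then have "((\<lambda>y. complex_of_real ((deriv ^^ k) h y)) has_vector_derivative D) (at x)"
    by (rule has_vector_derivative_transform_within_open[OF _ I Suc.prems]) (use Suc.IH in auto)
  then have d1: "((deriv ^^ k) h has_field_derivative Re D) (at x)"
    and d2: "((\<lambda>y. 0) has_field_derivative Im D) (at x)"
    using has_field_derivative_Re has_field_derivative_Im by fastforce+
  have "Im D = 0" using DERIV_unique[OF d2 DERIV_const] .
  then have "D = of_real (Re D)" by (simp add: complex_eq_iff)
  moreover have "deriv ((deriv ^^ k) h) x = Re D" using d1 by (rule DERIV_imp_deriv)
  ultimately show ?case unfolding D_def by simp
qed

lemma higher_deriv_exp_bellc:
  fixes G :: "complex \<Rightarrow> complex"
  assumes holo: "G holomorphic_on W" and W: "open W" and z: "z \<in> W"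
  shows "(deriv ^^ k) (\<lambda>w. exp (G w)) z = exp (G z) * bellc (\<lambda>j. (deriv ^^ j) G z) k"
proof (induction k rule: less_induct)
  case (less k)
  show ?case
  proof (cases k)
    case 0 then show ?thesis by simp
  next
    case (Suc k')
    have holE: "(\<lambda>w. exp (G w)) holomorphic_on W" using holo by (intro holomorphic_intros)
    have holdG: "deriv G holomorphic_on W" using holo W by (rule holomorphic_deriv)
    have dE: "deriv (\<lambda>w. exp (G w)) w = deriv G w * exp (G w)" if "w \<in> W" for w
    proof -
      have "(G has_field_derivative deriv G w) (at w)"
        using holo W that by (meson DERIV_deriv_iff_field_differentiable holomorphic_on_imp_differentiable_at)
      then have "((\<lambda>w. exp (G w)) has_field_derivative exp (G w) * deriv G w) (at w)"
        by (auto intro!: derivative_eq_intros)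
      then show ?thesis by (simp add: DERIV_imp_deriv mult.commute)
    qed
    have "(deriv ^^ k) (\<lambda>w. exp (G w)) z = (deriv ^^ k') (deriv (\<lambda>w. exp (G w))) z"
      unfolding Suc by (simp add: funpow_Suc_right del: funpow.simps)
    also have "\<dots> = (deriv ^^ k') (\<lambda>w. deriv G w * exp (G w)) z"
      by (rule higher_deriv_transform_within_open[OF _ _ W z])
         (use holE W holdG dE in \<open>auto intro!: holomorphic_intros holomorphic_deriv\<close>)
    also have "\<dots> = (\<Sum>i = 0..k'. of_nat (k' choose i) * (deriv ^^ i) (deriv G) z * (deriv ^^ (k'-i)) (\<lambda>w. exp (G w)) z)"
      by (rule higher_deriv_mult[OF holdG holE W z])
    also have "\<dots> = (\<Sum>i = 0..k'. of_nat (k' choose i) * (deriv ^^ Suc i) G z * (exp (G z) * bellc (\<lambda>j. (deriv ^^ j) G z) (k'-i)))"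
      by (intro sum.cong refl) (use less Suc in \<open>auto simp: funpow_Suc_right simp del: funpow.simps\<close>)
    also have "\<dots> = exp (G z) * bellc (\<lambda>j. (deriv ^^ j) G z) k"
      unfolding Suc bellc_Suc sum_distrib_left by (intro sum.cong refl) (simp add: ac_simps)
    finally show ?thesis .
  qed
qed


definition kdev :: "(nat \<Rightarrow> real) \<Rightarrow> real \<Rightarrow> nat \<Rightarrow> real" where
  "kdev a t n = real n - khinchin_mean a t"
definition dd :: "(nat \<Rightarrow> real) \<Rightarrow> real \<Rightarrow> nat \<Rightarrow> real" where
  "dd a t n = kdev a t n / sqrt (khinchin_var a t)"
definition kmom :: "(nat \<Rightarrow> real) \<Rightarrow> real \<Rightarrow> nat \<Rightarrow> real" where
  "kmom a t k = (\<Sum>n. khinchin_prob a t n * dd a t n ^ k)"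

lemma pow_le_fact_exp:
  assumes "(x::real) \<ge> 0"
  shows "x^k / fact k \<le> exp x"
proof -
  have "x^k / fact k = (\<Sum>i\<in>{k}. x^i / fact i)" by simp
  also have "\<dots> \<le> (\<Sum>i. x^i / fact i)"
    by (rule sum_le_suminf) (use summable_exp_generic[of x] assms in \<open>auto simp: divide_inverse_commute\<close>)
  also have "\<dots> = exp x" using exp_converges[of x] by (simp add: sums_iff divide_inverse_commute)
  finally show ?thesis .
qed

context
  fixes a :: "nat \<Rightarrow> real"
  assumes K: "in_class_K a"
begin

lemma a_nonneg: "a n \<ge> 0" using K by (auto simp: in_class_K_def)
lemma a0_pos: "a 0 > 0" using K by (auto simp: in_class_K_def)
lemma R_pos: "conv_radius a > 0" using K by (auto simp: in_class_K_def)
lemma exists_pos: "\<exists>n>0. a n \<noteq> 0" using K by (auto simp: in_class_K_def)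

lemma summable_a:
  assumes "0 \<le> c" "ereal c < conv_radius a"
  shows "summable (\<lambda>n. a n * c^n)"
  using summable_in_conv_radius[of c a] assms by simp

lemma pser_pos:
  assumes "0 \<le> c" "ereal c < conv_radius a"
  shows "pser a c > 0"
proof -
  have "a 0 * c^0 \<le> pser a c" unfolding pser_def
    using sum_le_suminf[OF summable_a[OF assms], of "{0}"] assms a_nonneg by simp
  then show ?thesis using a0_pos by simp
qed

context
  fixes t :: real
  assumes t: "0 < t" "ereal t < conv_radius a"
begin

lemma ft_pos: "pser a t > 0" using pser_pos t by simp

lemma p_nonneg: "khinchin_prob a t n \<ge> 0"
  unfolding khinchin_prob_def using a_nonneg t ft_pos by simp

lemma summable_p: "summable (khinchin_prob a t)"
  unfolding khinchin_prob_def using summable_a[of t] t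
  by (intro summable_divide) simp

lemma sum_p: "(\<Sum>n. khinchin_prob a t n) = 1"
  unfolding khinchin_prob_def using summable_a[of t] t ft_pos
  by (subst suminf_divide) (auto simp: pser_def)

lemma p_exp:
  "khinchin_prob a t n * exp (l * kdev a t n) =
     a n * (t * exp l)^n * (exp (- l * khinchin_mean a t) / pser a t)"
proof -
  have "exp (l * kdev a t n) = exp l ^ n * exp (- l * khinchin_mean a t)"
    unfolding kdev_def by (simp add: algebra_simps exp_diff exp_of_nat_mult[symmetric] divide_inverse exp_minus)
  then show ?thesis unfolding khinchin_prob_def by (simp add: power_mult_distrib)
qed

lemma summable_p_exp:
  assumes "ereal (t * exp l) < conv_radius a"
  shows "summable (\<lambda>n. khinchin_prob a t n * exp (l * kdev a t n))"
  unfolding p_exp using summable_a[OF _ assms] t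
  by (intro summable_mult2) simp

lemma summable_p_exp_abs:
  assumes "ereal (t * exp l) < conv_radius a" "l \<ge> 0"
  shows "summable (\<lambda>n. khinchin_prob a t n * exp (l * \<bar>kdev a t n\<bar>))"
proof (rule summable_comparison_test'[OF summable_add[OF summable_p_exp[OF assms(1)] summable_p_exp[of "-l"]]])
  have "t * exp (-l) \<le> t" using t assms(2) by (simp add: mult_le_cancel_left1)
  then show "ereal (t * exp (- l)) < conv_radius a" using t(2) by (meson ereal_less_eq(3) order_le_less_trans)
  fix n
  have "exp (l * \<bar>kdev a t n\<bar>) \<le> exp (l * kdev a t n) + exp (- l * kdev a t n)"
    by (cases "kdev a t n \<ge> 0") (auto simp: add_increasing2 add_increasing)
  then show "norm (khinchin_prob a t n * exp (l * \<bar>kdev a t n\<bar>)) \<le>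
     khinchin_prob a t n * exp (l * kdev a t n) + khinchin_prob a t n * exp (- l * kdev a t n)"
    using p_nonneg[of n] by (simp add: mult_left_mono distrib_left[symmetric])
qed

lemma exists_l: "\<exists>l>0. ereal (t * exp l) < conv_radius a"
proof -
  obtain r where r: "ereal t < ereal r" "ereal r < conv_radius a"
    using ereal_dense2[OF t(2)] by metis 
  then have "t < r" by simp
  define l where "l = ln (r / t)"
  have "l > 0" using \<open>t < r\<close> t by (simp add: l_def)
  moreover have "t * exp l = r" using \<open>t < r\<close> t by (simp add: l_def)
  ultimately show ?thesis using r by auto
qed

lemma summable_p_pow:
  "summable (\<lambda>n. khinchin_prob a t n * \<bar>kdev a t n\<bar>^k)"
proof -
  obtain l where l: "l > 0" "ereal (t * exp l) < conv_radius a" using exists_l by blast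
  show ?thesis
  proof (rule summable_comparison_test'[OF summable_mult[OF summable_p_exp_abs[OF l(2)], of "fact k / l^k"]])
    show "0 \<le> l" using l by simp
    fix n
    have "(l * \<bar>kdev a t n\<bar>)^k / fact k \<le> exp (l * \<bar>kdev a t n\<bar>)"
      by (rule pow_le_fact_exp) (use l in simp)
    then have "\<bar>kdev a t n\<bar>^k \<le> fact k / l^k * exp (l * \<bar>kdev a t n\<bar>)"
      using l by (simp add: field_simps power_mult_distrib)
    then have "khinchin_prob a t n * \<bar>kdev a t n\<bar>^k \<le> khinchin_prob a t n * (fact k / l^k * exp (l * \<bar>kdev a t n\<bar>))"
      by (rule mult_left_mono[OF _ p_nonneg])
    then show "norm (khinchin_prob a t n * \<bar>kdev a t n\<bar> ^ k) \<le>
        fact k / l ^ k * (khinchin_prob a t n * exp (l * \<bar>kdev a t n\<bar>))"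
      using p_nonneg[of n] by (simp add: abs_mult mult_ac)
  qed
qed

lemma summable_p_pow':
  "summable (\<lambda>n. khinchin_prob a t n * (kdev a t n)^k)"
  by (rule summable_comparison_test'[OF summable_p_pow[of k]]) (simp add: abs_mult power_abs p_nonneg)

lemma summable_p_n: "summable (\<lambda>n. khinchin_prob a t n * real n)"
proof -
  have "summable (\<lambda>n. khinchin_prob a t n * kdev a t n + khinchin_mean a t * khinchin_prob a t n)"
    using summable_p_pow'[of 1] summable_p by (intro summable_add summable_mult) auto
  then show ?thesis by (simp add: kdev_def algebra_simps)
qed

lemma mean_dev: "(\<Sum>n. khinchin_prob a t n * kdev a t n) = 0"
proof -
  have "(\<Sum>n. khinchin_prob a t n * kdev a t n) =
     (\<Sum>n. khinchin_prob a t n * real n) - (\<Sum>n. khinchin_mean a t * khinchin_prob a t n)"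
  proof -
    have "(\<lambda>n. khinchin_prob a t n * kdev a t n) = (\<lambda>n. khinchin_prob a t n * real n - khinchin_mean a t * khinchin_prob a t n)"
      unfolding kdev_def by (auto simp: algebra_simps)
    then show ?thesis using suminf_diff[OF summable_p_n summable_mult[OF summable_p]] by simp
  qed
  also have "\<dots> = 0" using sum_p summable_p
    by (subst suminf_mult) (auto simp: khinchin_mean_def mult.commute)
  finally show ?thesis .
qed

lemma var_eq: "khinchin_var a t = (\<Sum>n. khinchin_prob a t n * kdev a t n ^ 2)"
  unfolding khinchin_var_def kdev_def by (simp add: mult.commute)

lemma var_pos: "khinchin_var a t > 0"
proof -
  obtain n0 where n0: "n0 > 0" "a n0 \<noteq> 0" using exists_pos by blast
  have pos0: "khinchin_prob a t 0 > 0" "khinchin_prob a t n0 > 0"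
    unfolding khinchin_prob_def using a0_pos n0 a_nonneg[of n0] t ft_pos by auto
  have "kdev a t 0 \<noteq> 0 \<or> kdev a t n0 \<noteq> 0" using n0 unfolding kdev_def by auto
  then obtain i where i: "khinchin_prob a t i * kdev a t i ^ 2 > 0"
    using pos0 by (metis mult_pos_pos zero_less_power2)
  have "khinchin_prob a t i * kdev a t i ^ 2 \<le> (\<Sum>n. khinchin_prob a t n * kdev a t n ^ 2)"
    using sum_le_suminf[OF summable_p_pow'[of 2], of "{i}"] p_nonneg by simp
  then show ?thesis using i var_eq by simp
qed

lemma summable_p_dd: "summable (\<lambda>n. khinchin_prob a t n * dd a t n ^ k)"
  unfolding dd_def power_divide times_divide_eq_right by (rule summable_divide[OF summable_p_pow'])

lemma summable_p_dd_abs: "summable (\<lambda>n. khinchin_prob a t n * \<bar>dd a t n\<bar> ^ k)"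
  unfolding dd_def abs_divide power_divide times_divide_eq_right by (rule summable_divide[OF summable_p_pow])

lemma kmom_1: "kmom a t 1 = 0"
proof -
  have s: "summable (\<lambda>n. khinchin_prob a t n * kdev a t n)" using summable_p_pow'[of 1] by simp
  show ?thesis
    unfolding kmom_def dd_def power_one_right times_divide_eq_right
    using suminf_divide[OF s, of "sqrt (khinchin_var a t)"] mean_dev by simp
qed

lemma kmom_2: "kmom a t 2 = 1"
proof -
  have "kmom a t 2 = (\<Sum>n. khinchin_prob a t n * kdev a t n ^ 2) / khinchin_var a t"
    unfolding kmom_def dd_def power_divide using var_pos
    by (subst suminf_divide[symmetric]) (auto intro: summable_p_pow')
  then show ?thesis using var_eq var_pos by simp
qed

end
end


lemma divR_c: "(y::complex) /\<^sub>R fact k = y / fact k"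
  by (simp add: scaleR_conv_of_real divide_inverse mult.commute)
lemma divR_r: "(y::real) /\<^sub>R fact k = y / fact k"
  by (simp add: divide_inverse mult.commute)

lemma fubini_exp:
  fixes p d :: "nat \<Rightarrow> real" and z :: complex
  assumes p: "\<And>n. p n \<ge> 0"
    and se: "summable (\<lambda>n. p n * exp (norm z * \<bar>d n\<bar>))"
    and sk: "\<And>k. summable (\<lambda>n. p n * \<bar>d n\<bar>^k)"
  shows "(\<lambda>k. of_real (\<Sum>n. p n * d n^k) / fact k * z^k) sums
           (\<Sum>n. of_real (p n) * exp (z * of_real (d n)))"
proof -
  define T where "T = (\<lambda>(n,k). of_real (p n) * (z * of_real (d n))^k / fact k :: complex)"
  have nT: "norm (T (n,k)) = p n * (norm z * \<bar>d n\<bar>)^k / fact k" for n k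
  proof -
    have "norm (T (n,k)) = norm (of_real (p n) :: complex) * (norm z * norm (of_real (d n)::complex))^k / norm (fact k :: complex)"
      unfolding T_def by (simp only: case_prod_conv norm_mult norm_divide norm_power)
    also have "\<dots> = p n * (norm z * \<bar>d n\<bar>)^k / fact k"
      using p[of n] by (simp only: norm_of_real norm_fact abs_of_nonneg)
    finally show ?thesis .
  qed
  have hs1: "((\<lambda>k. norm (T (n,k))) has_sum p n * exp (norm z * \<bar>d n\<bar>)) UNIV" for n
  proof -
    have "(\<lambda>k. (norm z * \<bar>d n\<bar>)^k /\<^sub>R fact k) sums exp (norm z * \<bar>d n\<bar>)"
      by (rule exp_converges)
    then have "(\<lambda>k. p n * ((norm z * \<bar>d n\<bar>)^k /\<^sub>R fact k)) sums (p n * exp (norm z * \<bar>d n\<bar>))"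
      by (rule sums_mult)
    then have "(\<lambda>k. norm (T (n,k))) sums (p n * exp (norm z * \<bar>d n\<bar>))"
      unfolding nT divR_r times_divide_eq_right .
    then show ?thesis by (rule sums_nonneg_imp_has_sum) simp
  qed
  have gs: "(\<lambda>n. p n * exp (norm z * \<bar>d n\<bar>)) summable_on UNIV"
    using se p by (subst summable_on_UNIV_nonneg_real_iff) auto
  have "(\<lambda>x. norm (T x)) summable_on Sigma UNIV (\<lambda>_. UNIV)"
    by (rule summable_on_SigmaI[where f="\<lambda>x. norm (T x)" and g="\<lambda>n. p n * exp (norm z * \<bar>d n\<bar>)"])
       (rule hs1, rule gs, simp)
  then have Tsum: "T summable_on UNIV \<times> UNIV"
    by (rule abs_summable_summable)
  define S where "S = infsum T (UNIV \<times> UNIV)"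
  have TS: "(T has_sum S) (UNIV \<times> UNIV)" unfolding S_def using Tsum by (rule has_sum_infsum)
  have in1: "((\<lambda>k. T (n,k)) has_sum of_real (p n) * exp (z * of_real (d n))) UNIV" for n
  proof (rule norm_summable_imp_has_sum)
    show "summable (\<lambda>k. norm (T (n, k)))"
      using has_sum_imp_sums[OF hs1[of n]] by (simp add: sums_iff)
    have "(\<lambda>k. (z * of_real (d n))^k /\<^sub>R fact k) sums exp (z * of_real (d n))"
      by (rule exp_converges)
    then have "(\<lambda>k. of_real (p n) * ((z * of_real (d n))^k /\<^sub>R fact k)) sums (of_real (p n) * exp (z * of_real (d n)))"
      by (rule sums_mult)
    then show "(\<lambda>k. T (n, k)) sums (of_real (p n) * exp (z * of_real (d n)))"
      unfolding T_def by (simp add: scaleR_conv_of_real divide_inverse_commute mult_ac)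
  qed
  have in2: "((\<lambda>n. T (n,k)) has_sum of_real (\<Sum>n. p n * d n^k) / fact k * z^k) UNIV" for k
  proof -
    have sk': "summable (\<lambda>n. p n * d n^k)"
      by (rule summable_comparison_test'[OF sk[of k]]) (simp add: abs_mult power_abs p)
    have "((\<lambda>n. complex_of_real (p n * d n^k)) has_sum of_real (\<Sum>n. p n * d n^k)) UNIV"
    proof (rule norm_summable_imp_has_sum)
      show "summable (\<lambda>n. norm (complex_of_real (p n * d n ^ k)))"
        unfolding norm_of_real using sk[of k] p by (simp add: abs_mult power_abs)
      show "(\<lambda>n. complex_of_real (p n * d n ^ k)) sums complex_of_real (\<Sum>n. p n * d n ^ k)"
        using sums_of_real[OF summable_sums[OF sk']] .
    qed
    then have "((\<lambda>n. z^k / fact k * complex_of_real (p n * d n^k)) has_sum z^k / fact k * of_real (\<Sum>n. p n * d n^k)) UNIV"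
      by (rule has_sum_cmult_right)
    moreover have "(\<lambda>n. z^k / fact k * complex_of_real (p n * d n^k)) = (\<lambda>n. T (n,k))"
      unfolding T_def by (auto simp: power_mult_distrib mult_ac)
    ultimately show ?thesis by (simp add: mult_ac)
  qed
  have A: "((\<lambda>n. of_real (p n) * exp (z * of_real (d n))) has_sum S) UNIV"
    by (rule has_sum_SigmaD[OF _ in1]) (use TS in simp)
  have TS': "((\<lambda>(k,n). T (n,k)) has_sum S) (UNIV \<times> UNIV)"
    using TS by (subst (asm) has_sum_swap) simp
  have B: "((\<lambda>k. of_real (\<Sum>n. p n * d n^k) / fact k * z^k) has_sum S) UNIV"
    by (rule has_sum_SigmaD[where f="\<lambda>(k,n). T (n,k)" and B="\<lambda>_. UNIV"]) (use TS' in simp, use in2 in simp)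
  have "(\<Sum>n. of_real (p n) * exp (z * of_real (d n))) = S"
    using has_sum_imp_sums[OF A] by (simp add: sums_iff)
  then show ?thesis using has_sum_imp_sums[OF B] by simp
qed


lemma summable_pow_fact: "summable (\<lambda>j. (x::real)^j / fact j)"
  using summable_exp_generic[of x] by (simp add: divide_inverse_commute)

lemma normal_tail_to_0: "(\<lambda>j. 2 * (t^2/2)^j / fact j :: real) \<longlonglongrightarrow> 0"
proof -
  have "summable (\<lambda>j. (t^2/2)^j / fact j :: real)"
    by (rule summable_pow_fact)
  then have "(\<lambda>j. (t^2/2)^j / fact j :: real) \<longlonglongrightarrow> 0" by (rule summable_LIMSEQ_zero)
  then have "(\<lambda>j. 2 * ((t^2/2)^j / fact j) :: real) \<longlonglongrightarrow> 2 * 0" by (rule tendsto_mult_left)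
  then show ?thesis by simp
qed

theorem moments_convergence_thm:
  fixes M :: "nat \<Rightarrow> real measure"
  assumes distr: "\<And>n. real_distribution (M n)"
    and integ: "\<And>n k. integrable (M n) (\<lambda>x. x^k)"
    and mom: "\<And>k. (\<lambda>n. integral\<^sup>L (M n) (\<lambda>x. x^k)) \<longlonglongrightarrow> integral\<^sup>L std_normal_distribution (\<lambda>x. x^k)"
  shows "weak_conv_m M std_normal_distribution"
proof (rule levy_continuity[OF distr real_dist_normal_dist])
  fix t :: real
  let ?N = "std_normal_distribution"
  define c where "c j = 2 * (t^2/2)^j / fact j" for j :: nat
  show "(\<lambda>n. char (M n) t) \<longlonglongrightarrow> char ?N t"
  proof (rule tendstoI)
    fix e :: real assume e: "e > 0"
    have "eventually (\<lambda>j. c j < e/4) sequentially"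
      unfolding c_def by (rule order_tendstoD(2)[OF normal_tail_to_0]) (use e in simp)
    then obtain j where cj: "c j < e/4" by (auto dest: eventually_happens)
    define k where "k = 2*j"
    have ck: "2 * \<bar>t\<bar>^k / fact k * integral\<^sup>L ?N (\<lambda>x. x^k) = c j"
    proof -
      have "integral\<^sup>L ?N (\<lambda>x. x^k) = fact (2*j) / (2^j * fact j)"
        unfolding k_def by (rule std_normal_distribution_even_moments(1))
      moreover have "\<bar>t\<bar>^k = (t^2)^j" unfolding k_def by (simp add: power_mult power_even_abs)
      moreover have "fact (2*j) > (0::real)" by simp
      ultimately show ?thesis unfolding c_def k_def by (simp add: field_simps power_divide)
    qed
    define P where "P n = (\<Sum>i\<le>k. ((\<i> * t)^i / fact i) * complex_of_real (integral\<^sup>L (M n) (\<lambda>x. x^i)))" for n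
    define PN where "PN = (\<Sum>i\<le>k. ((\<i> * t)^i / fact i) * complex_of_real (integral\<^sup>L ?N (\<lambda>x. x^i)))"
    have "P \<longlonglongrightarrow> PN" unfolding P_def PN_def
      by (intro tendsto_intros mom)
    then have ev1: "eventually (\<lambda>n. dist (P n) PN < e/4) sequentially"
      by (rule tendstoD) (use e in simp)
    have "(\<lambda>n. 2 * \<bar>t\<bar>^k / fact k * integral\<^sup>L (M n) (\<lambda>x. x^k)) \<longlonglongrightarrow> c j"
      unfolding ck[symmetric] by (intro tendsto_intros mom)
    then have ev2: "eventually (\<lambda>n. 2 * \<bar>t\<bar>^k / fact k * integral\<^sup>L (M n) (\<lambda>x. x^k) < c j + e/4) sequentially"
      by (rule order_tendstoD(2)) (use e in simp)
    have absk: "(\<lambda>x::real. \<bar>x\<bar>^k) = (\<lambda>x. x^k)" unfolding k_def by (simp add: power_even_abs)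
    have b1: "cmod (char (M n) t - P n) \<le> 2 * \<bar>t\<bar>^k / fact k * integral\<^sup>L (M n) (\<lambda>x. x^k)" for n
      using real_distribution.char_approx1[OF distr, of k n t] integ unfolding P_def absk by simp
    have b2: "cmod (char ?N t - PN) \<le> c j"
      using real_distribution.char_approx1[OF real_dist_normal_dist, of k t]
        integrable_std_normal_distribution_moment ck unfolding PN_def absk by simp
    show "eventually (\<lambda>n. dist (char (M n) t) (char ?N t) < e) sequentially"
      using ev1 ev2
    proof eventually_elim
      case (elim n)
      have "dist (char (M n) t) (char ?N t) \<le> cmod (char (M n) t - P n) + dist (P n) PN + cmod (char ?N t - PN)"
      proof -
        have eq: "char (M n) t - char ?N t = ((char (M n) t - P n) + (P n - PN)) - (char ?N t - PN)"
          by (simp add: algebra_simps)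
        have "cmod (char (M n) t - char ?N t) \<le> cmod ((char (M n) t - P n) + (P n - PN)) + cmod (char ?N t - PN)"
          unfolding eq by (rule norm_triangle_ineq4)
        also have "\<dots> \<le> cmod (char (M n) t - P n) + cmod (P n - PN) + cmod (char ?N t - PN)"
          using norm_triangle_ineq[of "char (M n) t - P n" "P n - PN"] by linarith
        finally show ?thesis by (simp add: dist_norm)
      qed
      also have "\<dots> < e" using b1[of n] b2 elim cj by linarith
      finally show ?case .
    qed
  qed
qed


definition fc :: "(nat \<Rightarrow> real) \<Rightarrow> complex \<Rightarrow> complex" where
  "fc a = (\<lambda>z. \<Sum>n. complex_of_real (a n) * z^n)"
definition Fc :: "(nat \<Rightarrow> real) \<Rightarrow> complex \<Rightarrow> complex" where
  "Fc a = (\<lambda>z. ln (fc a (exp z)))"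
definition Uset :: "(nat \<Rightarrow> real) \<Rightarrow> real \<Rightarrow> complex set" where
  "Uset a r = {z. Re z < ln r} \<inter> (\<lambda>z. fc a (exp z)) -` {w. Re w > 0}"

context
  fixes a :: "nat \<Rightarrow> real"
  assumes K: "in_class_K a"
begin

context
  fixes r :: real
  assumes r: "0 < r" "ereal r < conv_radius a"
begin

lemma summable_fc: "norm z < r \<Longrightarrow> summable (\<lambda>n. complex_of_real (a n) * z^n)"
proof (rule summable_comparison_test'[OF summable_a[OF K, of r]])
  show "0 \<le> r" "ereal r < conv_radius a" using r by auto
  fix n assume z: "norm z < r"
  have "norm z ^ n \<le> r ^ n" using z by (intro power_mono) auto
  then show "norm (complex_of_real (a n) * z ^ n) \<le> a n * r ^ n"
    using a_nonneg[OF K, of n] by (simp add: norm_mult norm_power mult_left_mono)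
qed

lemma fc_holo: "fc a holomorphic_on ball 0 r"
  unfolding holomorphic_on_open[OF open_ball] fc_def
proof
  fix x :: complex assume "x \<in> ball 0 r"
  then have "norm x < r" by simp
  then show "\<exists>f'. ((\<lambda>z. \<Sum>n. complex_of_real (a n) * z ^ n) has_field_derivative f') (at x)"
    using termdiffs_strong'[of r "\<lambda>n. complex_of_real (a n)" x] summable_fc by blast
qed

lemma fc_real: "0 \<le> x \<Longrightarrow> x < r \<Longrightarrow> fc a (of_real x) = of_real (pser a x)"
proof -
  assume x: "0 \<le> x" "x < r"
  then have "ereal x < conv_radius a" using r(2) by (metis less_ereal.simps(1) order.strict_trans)
  then have "complex_of_real (\<Sum>n. a n * x^n) = (\<Sum>n. complex_of_real (a n * x^n))"
    using x by (intro suminf_of_real summable_a[OF K]) auto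
  then show ?thesis unfolding fc_def pser_def by simp
qed

lemma fce_holo: "(\<lambda>z. fc a (exp z)) holomorphic_on {z. Re z < ln r}"
proof -
  have "(fc a \<circ> exp) holomorphic_on {z. Re z < ln r}"
  proof (rule holomorphic_on_compose_gen[OF _ fc_holo])
    show "exp holomorphic_on {z. Re z < ln r}" by (intro holomorphic_intros)
    show "exp ` {z. Re z < ln r} \<subseteq> ball 0 r"
    proof
      fix w assume "w \<in> exp ` {z. Re z < ln r}"
      then obtain z where z: "Re z < ln r" "w = exp z" by auto
      have "norm w = exp (Re z)" using z by simp
      also have "\<dots> < exp (ln r)" using z by simp
      finally show "w \<in> ball 0 r" using r by simp
    qed
  qed
  then show ?thesis by (simp add: o_def)
qed

lemma U_open: "open (Uset a r)"
  unfolding Uset_def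
  by (rule continuous_open_preimage[OF holomorphic_on_imp_continuous_on[OF fce_holo]
        open_halfspace_Re_lt open_halfspace_Re_gt])

lemma Fc_holo: "Fc a holomorphic_on Uset a r"
proof -
  have "(ln \<circ> (\<lambda>z. fc a (exp z))) holomorphic_on Uset a r"
  proof (rule holomorphic_on_compose_gen)
    show "(\<lambda>z. fc a (exp z)) holomorphic_on Uset a r"
      by (rule holomorphic_on_subset[OF fce_holo]) (auto simp: Uset_def)
    show "ln holomorphic_on {w. Re w > 0}"
      by (rule holomorphic_on_Ln) (auto simp: complex_nonpos_Reals_iff)
    show "(\<lambda>z. fc a (exp z)) ` Uset a r \<subseteq> {w. Re w > 0}" by (auto simp: Uset_def)
  qed
  then show ?thesis by (simp add: o_def Fc_def)
qed

lemma real_in_U: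
  assumes "x < ln r"
  shows "complex_of_real x \<in> Uset a r" "Fc a (of_real x) = of_real (fulcrum a x)"
proof -
  have ex: "exp x < r" using assms r by (metis exp_less_cancel_iff exp_ln)
  have fe: "fc a (exp (of_real x)) = of_real (pser a (exp x))"
    unfolding exp_of_real by (rule fc_real) (use ex in auto)
  have pp: "pser a (exp x) > 0"
    by (rule pser_pos[OF K]) (use ex r in \<open>auto intro: order.strict_trans[of _ "ereal r"]\<close>)
  show "complex_of_real x \<in> Uset a r" unfolding Uset_def using assms fe pp by simp
  show "Fc a (of_real x) = of_real (fulcrum a x)"
    unfolding Fc_def fulcrum_def fe using pp by (simp add: Ln_of_real)
qed

lemma Fc_deriv:
  assumes "x < ln r"
  shows "(deriv ^^ k) (Fc a) (of_real x) = of_real ((deriv ^^ k) (fulcrum a) x)"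
  by (rule real_complex_higher_deriv[OF Fc_holo U_open open_lessThan, of "ln r"])
     (use real_in_U assms in auto)

end
end


definition sg :: "(nat \<Rightarrow> real) \<Rightarrow> real \<Rightarrow> real" where
  "sg a t = sqrt (khinchin_var a t)"
definition Gt :: "(nat \<Rightarrow> real) \<Rightarrow> real \<Rightarrow> complex \<Rightarrow> complex" where
  "Gt a t = (\<lambda>z. Fc a (of_real (1 / sg a t) * z + of_real (ln t)) - Fc a (of_real (ln t))
              - of_real (khinchin_mean a t / sg a t) * z)"
definition Wset :: "(nat \<Rightarrow> real) \<Rightarrow> real \<Rightarrow> real \<Rightarrow> complex set" where
  "Wset a r t = (\<lambda>z. of_real (1 / sg a t) * z + of_real (ln t)) -` Uset a r"
definition gk :: "(nat \<Rightarrow> real) \<Rightarrow> real \<Rightarrow> nat \<Rightarrow> real" where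
  "gk a t j = (deriv ^^ j) (fulcrum a) (ln t) / sg a t ^ j - (if j = 1 then khinchin_mean a t / sg a t else 0)"

context
  fixes a :: "nat \<Rightarrow> real" and r t :: real
  assumes K: "in_class_K a"
    and r: "0 < r" "ereal r < conv_radius a"
    and t: "0 < t" "t < r"
begin

lemma tR: "ereal t < conv_radius a"
  using t r by (metis less_ereal.simps(1) order.strict_trans)

lemma sg_pos: "sg a t > 0"
  unfolding sg_def using var_pos[OF K t(1) tR] by simp

lemma lnt: "ln t < ln r" using t by simp

lemma W_open: "open (Wset a r t)"
  unfolding Wset_def by (rule continuous_open_vimage[OF U_open[OF K r]]) (intro continuous_intros)

lemma zero_in_W: "0 \<in> Wset a r t"
  unfolding Wset_def using real_in_U(1)[OF K r lnt] by simp

lemma map_W: "z \<in> Wset a r t \<Longrightarrow> of_real (1 / sg a t) * z + of_real (ln t) \<in> Uset a r"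
  unfolding Wset_def by simp

lemma comp_holo: "(\<lambda>z. Fc a (of_real (1 / sg a t) * z + of_real (ln t))) holomorphic_on Wset a r t"
proof -
  have "(Fc a \<circ> (\<lambda>z. of_real (1 / sg a t) * z + of_real (ln t))) holomorphic_on Wset a r t"
  proof (rule holomorphic_on_compose_gen[OF _ Fc_holo[OF K r]])
    show "(\<lambda>z. of_real (1 / sg a t) * z + of_real (ln t)) holomorphic_on Wset a r t"
      by (intro holomorphic_intros)
    show "(\<lambda>z. of_real (1 / sg a t) * z + of_real (ln t)) ` Wset a r t \<subseteq> Uset a r"
      by (rule image_subsetI) (rule map_W)
  qed
  then show ?thesis by (simp add: o_def)
qed

lemma Gt_holo: "Gt a t holomorphic_on Wset a r t"
  unfolding Gt_def by (intro holomorphic_intros comp_holo)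

lemma Gt_0: "Gt a t 0 = 0" unfolding Gt_def by simp

lemma Gt_deriv:
  assumes "j \<ge> 1"
  shows "(deriv ^^ j) (Gt a t) 0 = of_real (gk a t j)"
proof -
  define u where "u = complex_of_real (1 / sg a t)"
  define c where "c = complex_of_real (ln t)"
  define mu where "mu = complex_of_real (khinchin_mean a t / sg a t)"
  have h1: "(\<lambda>z. Fc a (u * z + c)) holomorphic_on Wset a r t" using comp_holo unfolding u_def c_def .
  have h2: "(\<lambda>z. Fc a (u * z + c) - Fc a c) holomorphic_on Wset a r t" by (intro holomorphic_intros h1)
  have "(deriv ^^ j) (Gt a t) 0 = (deriv ^^ j) (\<lambda>z. Fc a (u * z + c) - Fc a c) 0 - (deriv ^^ j) (\<lambda>z. mu * z) 0"
    unfolding Gt_def u_def[symmetric] c_def[symmetric] mu_def[symmetric]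
    by (rule higher_deriv_diff[OF h2 _ W_open zero_in_W]) (intro holomorphic_intros)
  also have "(deriv ^^ j) (\<lambda>z. Fc a (u * z + c) - Fc a c) 0 = (deriv ^^ j) (\<lambda>z. Fc a (u * z + c)) 0 - (deriv ^^ j) (\<lambda>z. Fc a c) 0"
    by (rule higher_deriv_diff[OF h1 _ W_open zero_in_W]) (intro holomorphic_intros)
  also have "(deriv ^^ j) (\<lambda>z. Fc a (u * z + c)) 0 = u^j * (deriv ^^ j) (Fc a) (u * 0 + c)"
    by (rule higher_deriv_compose_linear'[OF Fc_holo[OF K r] W_open U_open[OF K r] zero_in_W])
       (use map_W in \<open>auto simp: u_def c_def\<close>)
  also have "(deriv ^^ j) (Fc a) (u * 0 + c) = of_real ((deriv ^^ j) (fulcrum a) (ln t))"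
    unfolding c_def by (simp add: Fc_deriv[OF K r lnt])
  also have "(deriv ^^ j) (\<lambda>z. Fc a c) 0 = 0" using assms by simp
  also have "(deriv ^^ j) (\<lambda>z. mu * z) 0 = (if j = 1 then mu else 0)" using assms by simp
  finally have "(deriv ^^ j) (Gt a t) 0 = u ^ j * complex_of_real ((deriv ^^ j) (fulcrum a) (ln t)) - 0 - (if j = 1 then mu else 0)" .
  then show ?thesis
    by (simp add: gk_def u_def mu_def power_divide)
qed

lemma exp_Gt:
  assumes z: "z \<in> Wset a r t"
  shows "exp (Gt a t z) = (\<Sum>n. of_real (khinchin_prob a t n) * exp (z * of_real (dd a t n)))"
proof -
  define u where "u = complex_of_real (1 / sg a t)"
  define c where "c = complex_of_real (ln t)"
  define mu where "mu = complex_of_real (khinchin_mean a t / sg a t)"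
  define w where "w = u * z + c"
  define f where "f = pser a t"
  have fpos: "f > 0" unfolding f_def by (rule ft_pos[OF K t(1) tR])
  have wU: "w \<in> Uset a r" unfolding w_def u_def c_def by (rule map_W[OF z])
  then have wre: "Re w < ln r" and wpos: "Re (fc a (exp w)) > 0" unfolding Uset_def by auto
  have "norm (exp w) = exp (Re w)" by simp
  also have "\<dots> < exp (ln r)" using wre by simp
  also have "\<dots> = r" using r by simp
  finally have nw: "norm (exp w) < r" .
  have expc: "exp c = of_real t" unfolding c_def using t by (simp add: exp_of_real)
  have fcc: "fc a (exp c) = of_real f" unfolding expc f_def by (rule fc_real[OF K r]) (use t in auto)
  have cU: "c \<in> Uset a r" unfolding c_def by (rule real_in_U(1)[OF K r lnt])
  then have "Re (fc a (exp c)) > 0" unfolding Uset_def by auto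
  have eFw: "exp (Fc a w) = fc a (exp w)" unfolding Fc_def using wpos by (subst exp_Ln) auto
  have eFc: "exp (Fc a c) = of_real f" unfolding Fc_def fcc using fpos by simp
  have "exp (Gt a t z) = exp (Fc a w) / exp (Fc a c) / exp (mu * z)"
    unfolding Gt_def w_def u_def c_def mu_def by (simp add: exp_diff)
  also have "\<dots> = fc a (exp w) / (of_real f * exp (mu * z))" unfolding eFw eFc by simp
  also have "fc a (exp w) = (\<Sum>n. complex_of_real (a n) * exp w ^ n)" unfolding fc_def ..
  also have "\<dots> / (of_real f * exp (mu * z)) = (\<Sum>n. complex_of_real (a n) * exp w ^ n / (of_real f * exp (mu * z)))"
    by (rule suminf_divide[symmetric]) (rule summable_fc[OF K r nw])
  also have "\<dots> = (\<Sum>n. of_real (khinchin_prob a t n) * exp (z * of_real (dd a t n)))"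
  proof (rule suminf_cong)
    fix n
    have sg0: "complex_of_real (sg a t) \<noteq> 0" using sg_pos by simp
    have e1: "exp w ^ n = of_real (t^n) * exp (of_nat n * (u*z))"
      unfolding w_def exp_add expc by (simp add: power_mult_distrib exp_of_nat_mult mult.commute)
    have e2: "z * of_real (dd a t n) = of_nat n * (u*z) - mu * z"
      unfolding dd_def kdev_def u_def mu_def sg_def[symmetric] using sg0
      by (simp add: field_simps)
    show "complex_of_real (a n) * exp w ^ n / (of_real f * exp (mu * z)) =
          of_real (khinchin_prob a t n) * exp (z * of_real (dd a t n))"
      unfolding e1 e2 khinchin_prob_def f_def[symmetric] exp_diff using fpos
      by (simp add: field_simps)
  qed
  finally show ?thesis .
qed

end


definition kap :: "(nat \<Rightarrow> real) \<Rightarrow> real \<Rightarrow> nat \<Rightarrow> real" where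
  "kap a t j = (if j = 1 then 0 else if j = 2 then 1 else
     (deriv ^^ j) (fulcrum a) (ln t) / ((deriv ^^ 2) (fulcrum a) (ln t)) powr (real j / 2))"

context
  fixes a :: "nat \<Rightarrow> real" and r t :: real
  assumes K: "in_class_K a"
    and r: "0 < r" "ereal r < conv_radius a"
    and t: "0 < t" "t < r"
begin

lemma kmom_sums:
  fixes z :: complex
  assumes z: "norm z < sg a t * ln (r / t)"
  shows "(\<lambda>k. of_real (kmom a t k) / fact k * z^k) sums
           (\<Sum>n. of_real (khinchin_prob a t n) * exp (z * of_real (dd a t n)))"
  unfolding kmom_def
proof (rule fubini_exp)
  have tR: "ereal t < conv_radius a" by (rule tR[OF K r t])
  have sg: "sg a t > 0" by (rule sg_pos[OF K r t])
  show "\<And>n. 0 \<le> khinchin_prob a t n" by (rule p_nonneg[OF K t(1) tR])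
  show "\<And>k. summable (\<lambda>n. khinchin_prob a t n * \<bar>dd a t n\<bar> ^ k)" by (rule summable_p_dd_abs[OF K t(1) tR])
  define l where "l = norm z / sg a t"
  have l0: "l \<ge> 0" unfolding l_def using sg by simp
  have "l < ln (r / t)" unfolding l_def using z sg by (simp add: field_simps)
  then have "exp l < exp (ln (r / t))" by simp
  also have "\<dots> = r / t" using t r by simp
  finally have "t * exp l < r" using t by (simp add: field_simps)
  then have "ereal (t * exp l) < conv_radius a" using r(2) by (metis less_ereal.simps(1) order.strict_trans)
  from summable_p_exp_abs[OF K t(1) tR this l0]
  have "summable (\<lambda>n. khinchin_prob a t n * exp (l * \<bar>kdev a t n\<bar>))" .
  moreover have "l * \<bar>kdev a t n\<bar> = norm z * \<bar>dd a t n\<bar>" for n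
    unfolding l_def dd_def sg_def[symmetric] using sg by (simp add: abs_divide)
  ultimately show "summable (\<lambda>n. khinchin_prob a t n * exp (norm z * \<bar>dd a t n\<bar>))" by simp
qed

lemma kmom_fps:
  "(\<lambda>z. exp (Gt a t z)) has_fps_expansion Abs_fps (\<lambda>k. of_real (kmom a t k) / fact k)"
proof -
  define \<delta> where "\<delta> = sg a t * ln (r / t)"
  have d0: "\<delta> > 0" unfolding \<delta>_def using sg_pos[OF K r t] t by simp
  let ?F = "Abs_fps (\<lambda>k. complex_of_real (kmom a t k) / fact k)"
  define z0 where "z0 = complex_of_real (\<delta>/2)"
  have "norm z0 < \<delta>" unfolding z0_def by (simp only: norm_of_real) (use d0 in simp)
  from sums_summable[OF kmom_sums[OF this[unfolded \<delta>_def]]]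
  have "summable (\<lambda>k. fps_nth ?F k * z0^k)" by simp
  then have "summable (\<lambda>k. fps_nth ?F k * (of_real (\<delta>/2))^k)" unfolding z0_def .
  then have "ereal (norm (complex_of_real (\<delta>/2))) \<le> fps_conv_radius ?F"
    unfolding fps_conv_radius_def by (rule conv_radius_geI)
  moreover have "norm (complex_of_real (\<delta>/2)) = \<delta>/2" using d0 by (simp only: norm_of_real)
  ultimately have le: "ereal (\<delta>/2) \<le> fps_conv_radius ?F" by simp
  have "ereal 0 < ereal (\<delta>/2)" using d0 by (simp only: less_ereal.simps)
  then have c1: "fps_conv_radius ?F > 0" using le by (simp only: zero_ereal_def[symmetric])
  have "eventually (\<lambda>z. z \<in> Wset a r t \<inter> ball 0 \<delta>) (nhds 0)"
    by (rule eventually_nhds_in_open) (use W_open[OF K r t] zero_in_W[OF K r t] d0 in auto)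
  then have c2: "eventually (\<lambda>z. eval_fps ?F z = exp (Gt a t z)) (nhds 0)"
  proof eventually_elim
    case (elim z)
    then have "norm z < \<delta>" by simp
    then have "eval_fps ?F z = (\<Sum>n. of_real (khinchin_prob a t n) * exp (z * of_real (dd a t n)))"
      unfolding eval_fps_def using kmom_sums[of z] unfolding \<delta>_def by (simp add: sums_iff)
    also have "\<dots> = exp (Gt a t z)" using exp_Gt[OF K r t, of z] elim by simp
    finally show ?case .
  qed
  show ?thesis unfolding has_fps_expansion_def using c1 c2 by simp
qed

lemma kmom_gk: "kmom a t k = bellc (gk a t) k"
proof -
  have "fps_nth (Abs_fps (\<lambda>k. of_real (kmom a t k) / fact k)) k = (deriv ^^ k) (\<lambda>z. exp (Gt a t z)) 0 / fact k"
    by (rule fps_nth_fps_expansion[OF kmom_fps])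
  also have "(deriv ^^ k) (\<lambda>z. exp (Gt a t z)) 0 = exp (Gt a t 0) * bellc (\<lambda>j. (deriv ^^ j) (Gt a t) 0) k"
    by (rule higher_deriv_exp_bellc[OF Gt_holo[OF K r t] W_open[OF K r t] zero_in_W[OF K r t]])
  also have "bellc (\<lambda>j. (deriv ^^ j) (Gt a t) 0) k = bellc (\<lambda>j. complex_of_real (gk a t j)) k"
    by (rule bellc_cong) (simp add: Gt_deriv[OF K r t])
  also have "\<dots> = of_real (bellc (gk a t) k)" by (rule bellc_of_real)
  finally show ?thesis by (simp add: Gt_0[OF K r t])
qed

lemma gk_1: "gk a t 1 = 0"
  using kmom_gk[of 1] kmom_1[OF K t(1) tR[OF K r t]] by (simp add: bellc_Suc)

lemma gk_2: "gk a t 2 = 1"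
proof -
  have "bellc (gk a t) 2 = gk a t 1 * gk a t 1 + gk a t 2"
    by (simp add: bellc_Suc numeral_2_eq_2)
  then show ?thesis using kmom_gk[of 2] kmom_2[OF K t(1) tR[OF K r t]] gk_1 by simp
qed

lemma F2_var: "(deriv ^^ 2) (fulcrum a) (ln t) = sg a t ^ 2"
  using gk_2 sg_pos[OF K r t] unfolding gk_def by (simp add: field_simps)

lemma kmom_kap: "kmom a t k = bellc (kap a t) k"
  unfolding kmom_gk
proof (rule bellc_cong)
  fix j :: nat assume j: "j \<ge> 1"
  have sg: "sg a t > 0" by (rule sg_pos[OF K r t])
  show "gk a t j = kap a t j"
  proof (cases "j = 1 \<or> j = 2")
    case True then show ?thesis using gk_1 gk_2 by (auto simp: kap_def)
  next
    case False
    have "(sg a t ^ 2) powr (real j / 2) = sg a t ^ j"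
    proof -
      have "(sg a t ^ 2) powr (real j / 2) = (sg a t powr 2) powr (real j / 2)"
        using sg by (simp add: powr_numeral)
      also have "\<dots> = sg a t powr (real j)" by (simp add: powr_powr)
      also have "\<dots> = sg a t ^ j" using sg by (rule powr_realpow)
      finally show ?thesis .
    qed
    then show ?thesis using False j unfolding gk_def kap_def F2_var by simp
  qed
qed

end

lemma kmom_kap_global:
  assumes K: "in_class_K a" and t: "0 < t" "ereal t < conv_radius a"
  shows "kmom a t k = bellc (kap a t) k"
proof -
  obtain r where r: "ereal t < ereal r" "ereal r < conv_radius a"
    using ereal_dense2[OF t(2)] by blast
  then have "t < r" by simp
  then show ?thesis using kmom_kap[OF K _ r(2) t(1)] t by simp
qed


definition kpmf :: "(nat \<Rightarrow> real) \<Rightarrow> real \<Rightarrow> nat pmf" where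
  "kpmf a t = embed_pmf (khinchin_prob a t)"
definition kmeas :: "(nat \<Rightarrow> real) \<Rightarrow> real \<Rightarrow> real measure" where
  "kmeas a t = distr (measure_pmf (kpmf a t)) borel (dd a t)"

lemma integral_pmf_nat:
  fixes P :: "nat pmf" and h :: "nat \<Rightarrow> real"
  assumes "summable (\<lambda>n. pmf P n * \<bar>h n\<bar>)"
  shows "integrable (measure_pmf P) h" "integral\<^sup>L (measure_pmf P) h = (\<Sum>n. pmf P n * h n)"
proof -
  have ic: "integrable (count_space UNIV) (\<lambda>n. pmf P n *\<^sub>R h n)"
    unfolding integrable_count_space_nat_iff using assms by (simp add: abs_mult)
  show "integrable (measure_pmf P) h"
    unfolding measure_pmf_eq_density using ic by (subst integrable_density) auto
  show "integral\<^sup>L (measure_pmf P) h = (\<Sum>n. pmf P n * h n)"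
    unfolding measure_pmf_eq_density using ic
    by (subst integral_density) (auto simp: integral_count_space_nat)
qed

context
  fixes a :: "nat \<Rightarrow> real" and t :: real
  assumes K: "in_class_K a"
    and t: "0 < t" "ereal t < conv_radius a"
begin

lemma pmf_kpmf: "pmf (kpmf a t) n = khinchin_prob a t n"
proof -
  have "(\<integral>\<^sup>+x. ennreal (khinchin_prob a t x) \<partial>count_space UNIV) = ennreal (\<Sum>n. khinchin_prob a t n)"
    by (simp add: nn_integral_count_space_nat suminf_ennreal2 p_nonneg[OF K t] summable_p[OF K t])
  then have "(\<integral>\<^sup>+x. ennreal (khinchin_prob a t x) \<partial>count_space UNIV) = 1"
    using sum_p[OF K t] by simp
  then show ?thesis unfolding kpmf_def by (rule pmf_embed_pmf[OF p_nonneg[OF K t]])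
qed

lemma kmeas_distr: "real_distribution (kmeas a t)"
  unfolding kmeas_def by (rule prob_space.real_distribution_distr[OF prob_space_measure_pmf]) simp

lemma kmeas_integrable: "integrable (kmeas a t) (\<lambda>x. x^k)"
  unfolding kmeas_def
  by (subst integrable_distr_eq) (auto intro!: integral_pmf_nat(1) simp: pmf_kpmf summable_p_dd_abs[OF K t] power_abs)

lemma kmeas_moment: "integral\<^sup>L (kmeas a t) (\<lambda>x. x^k) = kmom a t k"
  unfolding kmeas_def kmom_def
  by (subst integral_distr) (auto simp: integral_pmf_nat(2) pmf_kpmf summable_p_dd_abs[OF K t] power_abs)

lemma kmeas_cdf: "cdf (kmeas a t) x = khinchin_norm_cdf a t x"
proof -
  have "cdf (kmeas a t) x = measure (measure_pmf (kpmf a t)) (dd a t -` {..x})"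
    unfolding cdf_def kmeas_def by (subst measure_distr) auto
  also have "\<dots> = integral\<^sup>L (measure_pmf (kpmf a t)) (indicator (dd a t -` {..x}))"
    by simp
  also have "\<dots> = (\<Sum>n. pmf (kpmf a t) n * indicator (dd a t -` {..x}) n)"
  proof (rule integral_pmf_nat(2))
    show "summable (\<lambda>n. pmf (kpmf a t) n * \<bar>indicator (dd a t -` {..x}) n :: real\<bar>)"
      by (rule summable_comparison_test'[OF summable_p[OF K t]])
         (auto simp: pmf_kpmf p_nonneg[OF K t] indicator_def)
  qed
  also have "\<dots> = khinchin_norm_cdf a t x"
    unfolding khinchin_norm_cdf_def pmf_kpmf dd_def kdev_def
    by (intro suminf_cong) (auto simp: indicator_def)
  finally show ?thesis .
qed

end


context
  fixes a :: "nat \<Rightarrow> real"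
  assumes K: "in_class_K a"
begin

lemma ln_filter: "filterlim ln (up_to_ln (conv_radius a)) (up_to (conv_radius a))"
proof (cases "conv_radius a")
  case (real r)
  then have r: "r > 0" using R_pos[OF K] by simp
  have "(ln \<longlongrightarrow> ln r) (at_left r)"
    using tendsto_ln[OF tendsto_ident_at[of r "{..<r}"]] r by simp
  moreover have "eventually (\<lambda>x. ln x < ln r) (at_left r)"
    using eventually_at_left_real[OF r] by eventually_elim auto
  ultimately have "filterlim ln (at_left (ln r)) (at_left r)"
    by (rule tendsto_imp_filterlim_at_left)
  then show ?thesis unfolding up_to_def up_to_ln_def real by simp
next
  case PInf
  then show ?thesis unfolding up_to_def up_to_ln_def by (simp add: ln_at_top)
next
  case MInf
  then show ?thesis using R_pos[OF K] by simp
qed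

lemma valid_ev: "eventually (\<lambda>t. 0 < t \<and> ereal t < conv_radius a) (up_to (conv_radius a))"
proof (cases "conv_radius a")
  case (real r)
  then have r: "r > 0" using R_pos[OF K] by simp
  have "up_to (conv_radius a) = at_left r" unfolding up_to_def real by simp
  then show ?thesis
    using eventually_at_left_real[OF r] by (simp add: real)
next
  case PInf
  then show ?thesis unfolding up_to_def by (simp add: eventually_gt_at_top)
next
  case MInf
  then show ?thesis using R_pos[OF K] by simp
qed

lemma moments_lim:
  assumes hyp: "\<And>k::nat. k \<ge> 3 \<Longrightarrow>
           ((\<lambda>s. (deriv ^^ k) (fulcrum a) s / ((deriv ^^ 2) (fulcrum a) s) powr (real k / 2))
              \<longlongrightarrow> 0) (up_to_ln (conv_radius a))"
  shows "((\<lambda>t. kmom a t k) \<longlongrightarrow> bellc gnorm k) (up_to (conv_radius a))"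
proof -
  have lim: "((\<lambda>t. bellc (kap a t) k) \<longlongrightarrow> bellc gnorm k) (up_to (conv_radius a))"
  proof (rule bellc_tendsto)
    fix j :: nat
    show "((\<lambda>t. kap a t (Suc j)) \<longlongrightarrow> gnorm (Suc j)) (up_to (conv_radius a))"
    proof (cases "Suc j \<ge> 3")
      case True
      have "((\<lambda>t. (deriv ^^ Suc j) (fulcrum a) (ln t) / ((deriv ^^ 2) (fulcrum a) (ln t)) powr (real (Suc j) / 2))
              \<longlongrightarrow> 0) (up_to (conv_radius a))"
        by (rule filterlim_compose[OF hyp[OF True] ln_filter])
      then show ?thesis using True by (simp add: kap_def gnorm_def)
    next
      case False
      then have "Suc j = 1 \<or> Suc j = 2" by auto
      then show ?thesis by (auto simp: kap_def gnorm_def)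
    qed
  qed
  have ev: "eventually (\<lambda>t. bellc (kap a t) k = kmom a t k) (up_to (conv_radius a))"
    using valid_ev by eventually_elim (simp add: kmom_kap_global[OF K])
  show ?thesis using lim unfolding tendsto_cong[OF ev] .
qed

lemma normal_isCont: "isCont (cdf std_normal_distribution) x"
proof -
  have "emeasure std_normal_distribution {x} = (\<integral>\<^sup>+ y. ennreal (std_normal_density y) * indicator {x} y \<partial>lborel)"
    by (subst emeasure_density) (auto simp: nn_integral_set_ennreal)
  also have "\<dots> = (\<integral>\<^sup>+ y. ennreal (std_normal_density x) * indicator {x} y \<partial>lborel)"
    by (intro nn_integral_cong) (auto simp: indicator_def)
  also have "\<dots> = 0" by (subst nn_integral_cmult_indicator) auto
  finally have "measure std_normal_distribution {x} = 0" by (simp add: measure_def)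
  then show ?thesis
    using finite_borel_measure.isCont_cdf[OF real_distribution.finite_borel_measure_M[OF real_dist_normal_dist]]
    by simp
qed

lemma seq_lim:
  assumes hyp: "\<And>k::nat. k \<ge> 3 \<Longrightarrow>
           ((\<lambda>s. (deriv ^^ k) (fulcrum a) s / ((deriv ^^ 2) (fulcrum a) s) powr (real k / 2))
              \<longlongrightarrow> 0) (up_to_ln (conv_radius a))"
    and T: "filterlim T (up_to (conv_radius a)) sequentially"
  shows "(\<lambda>n. khinchin_norm_cdf a (T n) x) \<longlonglongrightarrow> cdf std_normal_distribution x"
proof -
  let ?N = std_normal_distribution
  let ?v = "\<lambda>t. 0 < t \<and> ereal t < conv_radius a"
  have evT: "eventually (\<lambda>n. ?v (T n)) sequentially"
    using filterlim_iff[THEN iffD1, OF T, rule_format, OF valid_ev] .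
  define M where "M n = (if ?v (T n) then kmeas a (T n) else ?N)" for n
  have Md: "real_distribution (M n)" for n
    unfolding M_def using kmeas_distr[OF K] real_dist_normal_dist by auto
  have Mi: "integrable (M n) (\<lambda>x. x^k)" for n k
    unfolding M_def using kmeas_integrable[OF K] integrable_std_normal_distribution_moment by auto
  have Mm: "(\<lambda>n. integral\<^sup>L (M n) (\<lambda>x. x^k)) \<longlonglongrightarrow> integral\<^sup>L ?N (\<lambda>x. x^k)" for k
  proof -
    have lim: "(\<lambda>n. kmom a (T n) k) \<longlonglongrightarrow> bellc gnorm k"
      by (rule filterlim_compose[OF moments_lim[OF hyp] T])
    have ev: "eventually (\<lambda>n. kmom a (T n) k = integral\<^sup>L (M n) (\<lambda>x. x^k)) sequentially"
      using evT by eventually_elim (simp add: M_def kmeas_moment[OF K])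
    show ?thesis using lim unfolding bellc_gnorm_moment tendsto_cong[OF ev] .
  qed
  have "weak_conv_m M ?N" by (rule moments_convergence_thm[OF Md Mi Mm])
  then have lim: "(\<lambda>n. cdf (M n) x) \<longlonglongrightarrow> cdf ?N x"
    unfolding weak_conv_m_def weak_conv_def using normal_isCont by blast
  have ev: "eventually (\<lambda>n. cdf (M n) x = khinchin_norm_cdf a (T n) x) sequentially"
    using evT by eventually_elim (simp add: M_def kmeas_cdf[OF K])
  show ?thesis using lim unfolding tendsto_cong[OF ev] .
qed

end


theorem theorem3p1:
  fixes a :: "nat \<Rightarrow> real"
  assumes "in_class_K a"
    and "\<And>k::nat. k \<ge> 3 \<Longrightarrow>
           ((\<lambda>s. (deriv ^^ k) (fulcrum a) s / ((deriv ^^ 2) (fulcrum a) s) powr (real k / 2))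
              \<longlongrightarrow> 0) (up_to_ln (conv_radius a))"
  shows "gaussian a"
  unfolding gaussian_def
proof
  fix x :: real
  note K = assms(1) and hyp = assms(2)
  show "((\<lambda>t. khinchin_norm_cdf a t x) \<longlongrightarrow> cdf std_normal_distribution x) (up_to (conv_radius a))"
  proof (cases "conv_radius a")
    case (real r)
    then have r: "r > 0" using R_pos[OF K] by simp
    have ut: "up_to (conv_radius a) = at_left r" unfolding up_to_def real by simp
    show ?thesis unfolding ut
    proof (rule tendsto_at_left_sequentially[OF r])
      fix S :: "nat \<Rightarrow> real"
      assume S: "\<And>n. S n < r" "\<And>n. 0 < S n" "incseq S" "S \<longlonglongrightarrow> r"
      have "filterlim S (at_left r) sequentially"
        by (rule tendsto_imp_filterlim_at_left[OF S(4)]) (use S(1) in simp)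
      then have T: "filterlim S (up_to (conv_radius a)) sequentially" unfolding ut .
      show "(\<lambda>n. khinchin_norm_cdf a (S n) x) \<longlonglongrightarrow> cdf std_normal_distribution x"
        using seq_lim[OF K hyp T] .
    qed
  next
    case PInf
    have ut: "up_to (conv_radius a) = at_top" unfolding up_to_def PInf by simp
    show ?thesis unfolding ut
    proof (rule tendsto_at_topI_sequentially)
      fix X :: "nat \<Rightarrow> real"
      assume "filterlim X at_top sequentially"
      then have T: "filterlim X (up_to (conv_radius a)) sequentially" unfolding ut .
      show "(\<lambda>n. khinchin_norm_cdf a (X n) x) \<longlonglongrightarrow> cdf std_normal_distribution x"
        using seq_lim[OF K hyp T] .
    qed
  next
    case MInf
    then show ?thesis using R_pos[OF K] by simp
  qed
qed

end
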